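(* Let $\mathbf v\in\mathbb R^{n\times m}_{<0}$, $\mathbf b\in\mathbb R^n_{<0}$, $\mathbf u\in\mathbb R^n_{<0}$, $\tau=(b_i/u_i)_i$, and $q_j=\min_{i\in[n]}|b_iv_{i,j}/u_i|$ for $j\in[m]$. Let $N(\mathbf v,\mathbf u,\mathbf b)$ be the network with source $s$, sink $t$, vertices $[n]\cup[m]$, edges $(s,i)$ of capacity $|b_i|$ for $i\in[n]$, edges $(i,j)$ of capacity $+\infty$ for each edge $(i,j)$ of $G_\tau(\mathbf v)$ (and no other agent–chore edges), and edges $(j,t)$ of capacity $q_j$ for $j\in[m]$. Then $\mathbf u$ is a competitive utility profile for $(\mathbf v,\mathbf b)$ if and only if (i) $\sum_i|b_i|=\sum_jq_j$ and (ii) a maximum $s$–$t$ flow in $N(\mathbf v,\mathbf u,\mathbf b)$ has value $\sum_i|b_i|$. Moreover, flows $\mathbf F$ of value $\sum_i|b_i|$ correspond to competitive allocations $\mathbf z$ with $\mathbf u(\mathbf z)=\mathbf u$ via $z_{i,j}=F_{i,j}/q_j$ (and conversely $F_{i,j}=q_jz_{i,j}$).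
   Context: Setup: agents $[n]$, chores $[m]$, allocations $\mathbf z\in\mathbb R^{n\times m}_{\ge0}$ with column sums $1$, $u_i(\mathbf z_i)=\sum_jv_{i,j}z_{i,j}$. Competitive allocation for budgets $\mathbf b$: there exist prices $\mathbf p\in\mathbb R^m_{<0}$ such that each $\mathbf z_i$ maximizes $u_i$ over bundles $\mathbf x\in\mathbb R^m_{\ge0}$ with $\sum_jp_jx_j\le b_i$; a competitive utility profile is $\mathbf u(\mathbf z)$ for such $\mathbf z$. For $\tau\in\mathbb R^n_{>0}$, $G_\tau(\mathbf v)$ is the bipartite graph with edge $(i,j)$ iff $\tau_i|v_{i,j}|\le\tau_{i'}|v_{i',j}|$ for all $i'$. *)

theory Defs
  imports Complex_Main "HOL-Library.Extended_Real"
begin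

text \<open>Agents are 0..<n, chores are 0..<m. Valuations v i j, budgets b i.
  Allocation z i j; bundles x :: nat => real (only coordinates j < m matter).\<close>

definition util :: "nat \<Rightarrow> (nat \<Rightarrow> nat \<Rightarrow> real) \<Rightarrow> nat \<Rightarrow> (nat \<Rightarrow> real) \<Rightarrow> real" where
  "util m v i x = (\<Sum>j<m. v i j * x j)"

definition is_allocation :: "nat \<Rightarrow> nat \<Rightarrow> (nat \<Rightarrow> nat \<Rightarrow> real) \<Rightarrow> bool" where
  "is_allocation n m z \<longleftrightarrow>
     (\<forall>i<n. \<forall>j<m. 0 \<le> z i j) \<and> (\<forall>j<m. (\<Sum>i<n. z i j) = 1)"

definition competitive_allocation ::
  "nat \<Rightarrow> nat \<Rightarrow> (nat \<Rightarrow> nat \<Rightarrow> real) \<Rightarrow> (nat \<Rightarrow> real) \<Rightarrow> (nat \<Rightarrow> nat \<Rightarrow> real) \<Rightarrow> bool" where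
  "competitive_allocation n m v b z \<longleftrightarrow>
     is_allocation n m z \<and>
     (\<exists>p :: nat \<Rightarrow> real. (\<forall>j<m. p j < 0) \<and>
        (\<forall>i<n. (\<Sum>j<m. p j * z i j) \<le> b i \<and>
               (\<forall>x :: nat \<Rightarrow> real. (\<forall>j<m. 0 \<le> x j) \<and> (\<Sum>j<m. p j * x j) \<le> b i
                   \<longrightarrow> util m v i x \<le> util m v i (z i))))"

definition competitive_profile ::
  "nat \<Rightarrow> nat \<Rightarrow> (nat \<Rightarrow> nat \<Rightarrow> real) \<Rightarrow> (nat \<Rightarrow> real) \<Rightarrow> (nat \<Rightarrow> real) \<Rightarrow> bool" where
  "competitive_profile n m v b u \<longleftrightarrow>
     (\<exists>z. competitive_allocation n m v b z \<and> (\<forall>i<n. u i = util m v i (z i)))"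

definition G_edge :: "nat \<Rightarrow> (nat \<Rightarrow> real) \<Rightarrow> (nat \<Rightarrow> nat \<Rightarrow> real) \<Rightarrow> nat \<Rightarrow> nat \<Rightarrow> bool" where
  "G_edge n \<tau> v i j \<longleftrightarrow> (\<forall>i'<n. \<tau> i * \<bar>v i j\<bar> \<le> \<tau> i' * \<bar>v i' j\<bar>)"

text \<open>A network: finite vertex set V, source s, sink t, capacities c (extended reals,
  +\<infinity> allowed; capacity 0 = no edge).\<close>

definition is_flow :: "'a set \<Rightarrow> 'a \<Rightarrow> 'a \<Rightarrow> ('a \<Rightarrow> 'a \<Rightarrow> ereal) \<Rightarrow> ('a \<Rightarrow> 'a \<Rightarrow> real) \<Rightarrow> bool" where
  "is_flow V s t c f \<longleftrightarrow>
     (\<forall>x\<in>V. \<forall>y\<in>V. 0 \<le> f x y \<and> ereal (f x y) \<le> c x y) \<and>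
     (\<forall>x\<in>V - {s, t}. (\<Sum>y\<in>V. f y x) = (\<Sum>y\<in>V. f x y))"

definition flow_value :: "'a set \<Rightarrow> 'a \<Rightarrow> ('a \<Rightarrow> 'a \<Rightarrow> real) \<Rightarrow> real" where
  "flow_value V s f = (\<Sum>y\<in>V. f s y) - (\<Sum>y\<in>V. f y s)"

definition is_max_flow_value :: "'a set \<Rightarrow> 'a \<Rightarrow> 'a \<Rightarrow> ('a \<Rightarrow> 'a \<Rightarrow> ereal) \<Rightarrow> real \<Rightarrow> bool" where
  "is_max_flow_value V s t c val \<longleftrightarrow>
     (\<exists>f. is_flow V s t c f \<and> flow_value V s f = val) \<and>
     (\<forall>f. is_flow V s t c f \<longrightarrow> flow_value V s f \<le> val)"

datatype node = Src | Snk | Agt nat | Chr nat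

definition tau :: "(nat \<Rightarrow> real) \<Rightarrow> (nat \<Rightarrow> real) \<Rightarrow> nat \<Rightarrow> real" where
  "tau b u i = b i / u i"

definition qcap :: "nat \<Rightarrow> (nat \<Rightarrow> nat \<Rightarrow> real) \<Rightarrow> (nat \<Rightarrow> real) \<Rightarrow> (nat \<Rightarrow> real) \<Rightarrow> nat \<Rightarrow> real" where
  "qcap n v u b j = Min ((\<lambda>i. \<bar>b i * v i j / u i\<bar>) ` {..<n})"

definition N_vertices :: "nat \<Rightarrow> nat \<Rightarrow> node set" where
  "N_vertices n m = {Src, Snk} \<union> Agt ` {..<n} \<union> Chr ` {..<m}"

fun N_cap :: "nat \<Rightarrow> nat \<Rightarrow> (nat \<Rightarrow> nat \<Rightarrow> real) \<Rightarrow> (nat \<Rightarrow> real) \<Rightarrow> (nat \<Rightarrow> real)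
              \<Rightarrow> node \<Rightarrow> node \<Rightarrow> ereal" where
  "N_cap n m v u b Src (Agt i) = (if i < n then ereal \<bar>b i\<bar> else 0)"
| "N_cap n m v u b (Agt i) (Chr j) =
     (if i < n \<and> j < m \<and> G_edge n (tau b u) v i j then \<infinity> else 0)"
| "N_cap n m v u b (Chr j) Snk = (if j < m then ereal (qcap n v u b j) else 0)"
| "N_cap n m v u b _ _ = 0"

end

theory Submission
  imports Defs
begin

fun mkf :: "nat \<Rightarrow> nat \<Rightarrow> (nat \<Rightarrow> real) \<Rightarrow> (nat \<Rightarrow> real) \<Rightarrow> (nat \<Rightarrow> nat \<Rightarrow> real)
              \<Rightarrow> node \<Rightarrow> node \<Rightarrow> real" where
  "mkf n m B Q F Src (Agt i) = (if i < n then B i else 0)"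
| "mkf n m B Q F (Agt i) (Chr j) = (if i < n \<and> j < m then F i j else 0)"
| "mkf n m B Q F (Chr j) Snk = (if j < m then Q j else 0)"
| "mkf n m B Q F _ _ = 0"

lemma sumV: "(\<Sum>y\<in>N_vertices n m. g y) = g Src + g Snk + (\<Sum>i<n. g (Agt i)) + (\<Sum>j<m. g (Chr j))"
proof -
  have e: "N_vertices n m = insert Src (insert Snk (Agt ` {..<n} \<union> Chr ` {..<m}))"
    by (auto simp: N_vertices_def)
  have "sum g (Agt ` {..<n} \<union> Chr ` {..<m}) = sum g (Agt ` {..<n}) + sum g (Chr ` {..<m})"
    by (rule sum.union_disjoint) auto
  moreover have "sum g (Agt ` {..<n}) = (\<Sum>i<n. g (Agt i))"
    by (simp add: sum.reindex inj_on_def)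
  moreover have "sum g (Chr ` {..<m}) = (\<Sum>j<m. g (Chr j))"
    by (simp add: sum.reindex inj_on_def)
  ultimately show ?thesis unfolding e by (simp add: image_iff add.assoc)
qed

lemma memV[simp]: "Src \<in> N_vertices n m" "Snk \<in> N_vertices n m"
  "Agt i \<in> N_vertices n m \<longleftrightarrow> i < n" "Chr j \<in> N_vertices n m \<longleftrightarrow> j < m"
  by (auto simp: N_vertices_def)

lemma sum_le_eq:
  fixes g h :: "'a \<Rightarrow> real"
  assumes "finite A" "\<forall>x\<in>A. g x \<le> h x" "sum g A = sum h A" "x \<in> A"
  shows "g x = h x"
proof -
  have "sum (\<lambda>x. h x - g x) A = 0" using assms by (simp add: sum_subtractf)
  then have "\<forall>x\<in>A. h x - g x = 0" using assms by (subst (asm) sum_nonneg_eq_0_iff) auto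
  then show ?thesis using assms by auto
qed

locale mk =
  fixes n m :: nat and v :: "nat\<Rightarrow>nat\<Rightarrow>real" and b u :: "nat\<Rightarrow>real"
  assumes n0: "0<n" and vneg: "\<forall>i<n. \<forall>j<m. v i j < 0"
    and bneg: "\<forall>i<n. b i < 0" and uneg: "\<forall>i<n. u i < 0"
begin

abbreviation "q \<equiv> qcap n v u b"
abbreviation "t \<equiv> tau b u"
abbreviation "V \<equiv> N_vertices n m"
abbreviation "c \<equiv> N_cap n m v u b"
abbreviation "B \<equiv> \<Sum>i<n. \<bar>b i\<bar>"

lemma t_pos: "i<n \<Longrightarrow> t i > 0" unfolding tau_def using bneg uneg by (metis divide_neg_neg)

lemma t_u: "i<n \<Longrightarrow> b i / t i = u i"
proof -
  assume "i<n"
  then have "b i \<noteq> 0" "u i \<noteq> 0" using bneg uneg by auto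
  then show ?thesis by (simp add: tau_def)
qed

lemma absterm: "i<n \<Longrightarrow> \<bar>b i * v i j / u i\<bar> = t i * \<bar>v i j\<bar>"
proof -
  assume i: "i<n"
  have "b i * v i j / u i = (b i / u i) * v i j" by simp
  then have "\<bar>b i * v i j / u i\<bar> = \<bar>b i / u i\<bar> * \<bar>v i j\<bar>" by (simp only: abs_mult)
  moreover have "\<bar>b i / u i\<bar> = t i" using t_pos[OF i] unfolding tau_def by (rule abs_of_pos)
  ultimately show ?thesis by (simp only:)
qed

lemma q_eq: "q j = Min ((\<lambda>i. t i * \<bar>v i j\<bar>) ` {..<n})"
  unfolding qcap_def by (rule arg_cong[where f=Min], rule image_cong) (rule refl, rule absterm, simp)

lemma q_le: "i<n \<Longrightarrow> q j \<le> t i * \<bar>v i j\<bar>"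
  unfolding q_eq by (rule Min_le) auto

lemma q_ge: "(\<And>i. i<n \<Longrightarrow> a \<le> t i * \<bar>v i j\<bar>) \<Longrightarrow> a \<le> q j"
  unfolding q_eq using n0 by (subst Min_ge_iff) auto

lemma q_pos: "j<m \<Longrightarrow> 0 < q j"
proof -
  assume j: "j<m"
  have "\<forall>x\<in>(\<lambda>i. t i * \<bar>v i j\<bar>) ` {..<n}. 0 < x"
  proof
    fix x assume "x \<in> (\<lambda>i. t i * \<bar>v i j\<bar>) ` {..<n}"
    then obtain i where i: "i<n" "x = t i * \<bar>v i j\<bar>" by auto
    have "v i j < 0" using vneg i j by auto
    then show "0 < x" using i t_pos[OF i(1)] by (simp add: mult_pos_neg)
  qed
  moreover have "(\<lambda>i. t i * \<bar>v i j\<bar>) ` {..<n} \<noteq> {}" using n0 by auto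
  ultimately show ?thesis unfolding q_eq by (simp add: Min_gr_iff)
qed

lemma edge_iff: "i<n \<Longrightarrow> G_edge n t v i j \<longleftrightarrow> t i * \<bar>v i j\<bar> = q j"
proof
  assume i: "i<n" and "G_edge n t v i j"
  then have "t i * \<bar>v i j\<bar> \<le> q j" by (intro q_ge) (auto simp: G_edge_def)
  then show "t i * \<bar>v i j\<bar> = q j" using q_le[OF i, of j] by linarith
next
  assume "i<n" "t i * \<bar>v i j\<bar> = q j"
  then show "G_edge n t v i j" unfolding G_edge_def using q_le by auto
qed

lemma v_le: "i<n \<Longrightarrow> j<m \<Longrightarrow> v i j \<le> - q j / t i"
proof -
  assume i: "i<n" and j: "j<m"
  have "q j \<le> t i * (- v i j)" using q_le[OF i, of j] vneg i j by (simp add: abs_of_neg)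
  then show ?thesis using t_pos[OF i] by (simp add: field_simps)
qed

lemma v_eq: "i<n \<Longrightarrow> j<m \<Longrightarrow> G_edge n t v i j \<Longrightarrow> v i j = - q j / t i"
proof -
  assume i: "i<n" and j: "j<m" and "G_edge n t v i j"
  then have "q j = t i * (- v i j)" using edge_iff[OF i] vneg i j by (simp add: abs_of_neg)
  then show ?thesis using t_pos[OF i] by (simp add: field_simps)
qed

lemma fz: "is_flow V Src Snk c f \<Longrightarrow> x\<in>V \<Longrightarrow> y\<in>V \<Longrightarrow> c x y = 0 \<Longrightarrow> f x y = 0"
proof -
  assume fl: "is_flow V Src Snk c f" and x: "x\<in>V" and y: "y\<in>V" and c0: "c x y = 0"
  have "0 \<le> f x y" "ereal (f x y) \<le> c x y" using fl x y unfolding is_flow_def by auto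
  then have "0 \<le> f x y" "ereal (f x y) \<le> ereal 0" using c0 by (auto simp: zero_ereal_def)
  then show "f x y = 0" by simp
qed

lemma fnn: "is_flow V Src Snk c f \<Longrightarrow> x\<in>V \<Longrightarrow> y\<in>V \<Longrightarrow> 0 \<le> f x y"
  unfolding is_flow_def by auto

lemma fcap: "is_flow V Src Snk c f \<Longrightarrow> x\<in>V \<Longrightarrow> y\<in>V \<Longrightarrow> ereal (f x y) \<le> c x y"
  unfolding is_flow_def by auto

lemma fcons: "is_flow V Src Snk c f \<Longrightarrow> x\<in>V \<Longrightarrow> x \<noteq> Src \<Longrightarrow> x \<noteq> Snk \<Longrightarrow>
   (\<Sum>y\<in>V. f y x) = (\<Sum>y\<in>V. f x y)"
  unfolding is_flow_def by auto

lemma fvalue: "is_flow V Src Snk c f \<Longrightarrow> flow_value V Src f = (\<Sum>i<n. f Src (Agt i))"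
  unfolding flow_value_def by (simp add: sumV fz cong: sum.cong_simp)

lemma in_Agt: "is_flow V Src Snk c f \<Longrightarrow> i<n \<Longrightarrow> (\<Sum>y\<in>V. f y (Agt i)) = f Src (Agt i)"
  by (simp add: sumV fz cong: sum.cong_simp)
lemma out_Agt: "is_flow V Src Snk c f \<Longrightarrow> i<n \<Longrightarrow> (\<Sum>y\<in>V. f (Agt i) y) = (\<Sum>j<m. f (Agt i) (Chr j))"
  by (simp add: sumV fz cong: sum.cong_simp)
lemma in_Chr: "is_flow V Src Snk c f \<Longrightarrow> j<m \<Longrightarrow> (\<Sum>y\<in>V. f y (Chr j)) = (\<Sum>i<n. f (Agt i) (Chr j))"
  by (simp add: sumV fz cong: sum.cong_simp)
lemma out_Chr: "is_flow V Src Snk c f \<Longrightarrow> j<m \<Longrightarrow> (\<Sum>y\<in>V. f (Chr j) y) = f (Chr j) Snk"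
  by (simp add: sumV fz cong: sum.cong_simp)

lemma src_le: "is_flow V Src Snk c f \<Longrightarrow> i<n \<Longrightarrow> f Src (Agt i) \<le> \<bar>b i\<bar>"
  using fcap[of f Src "Agt i"] by simp

lemma val_le: assumes fl: "is_flow V Src Snk c f" shows "flow_value V Src f \<le> B"
  unfolding fvalue[OF fl] by (rule sum_mono) (simp add: src_le[OF fl])


lemma part2:
  assumes eq: "B = (\<Sum>j<m. q j)" and fl: "is_flow V Src Snk c f" and val: "flow_value V Src f = B"
  shows "competitive_allocation n m v b (\<lambda>i j. f (Agt i) (Chr j) / q j) \<and>
         (\<forall>i<n. util m v i (\<lambda>j. f (Agt i) (Chr j) / q j) = u i)"
proof -
  define F where "F i j = f (Agt i) (Chr j)" for i j
  have Fnn: "0 \<le> F i j" if "i<n" "j<m" for i j using fnn[OF fl, of "Agt i" "Chr j"] that by (simp add: F_def)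
  have srcsat: "f Src (Agt i) = \<bar>b i\<bar>" if "i<n" for i
    using sum_le_eq[of "{..<n}" "\<lambda>i. f Src (Agt i)" "\<lambda>i. \<bar>b i\<bar>" i] src_le[OF fl] fvalue[OF fl] val that
    by auto
  have outA: "(\<Sum>j<m. F i j) = \<bar>b i\<bar>" if i: "i<n" for i
    using fcons[OF fl, of "Agt i"] in_Agt[OF fl i] out_Agt[OF fl i] srcsat[OF i] i by (simp add: F_def)
  have inC: "(\<Sum>i<n. F i j) = f (Chr j) Snk" if j: "j<m" for j
    using fcons[OF fl, of "Chr j"] in_Chr[OF fl j] out_Chr[OF fl j] j by (simp add: F_def)
  have snkle: "f (Chr j) Snk \<le> q j" if "j<m" for j using fcap[OF fl, of "Chr j" Snk] that by simp
  have "(\<Sum>j<m. f (Chr j) Snk) = (\<Sum>j<m. \<Sum>i<n. F i j)" using inC by simp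
  also have "\<dots> = (\<Sum>i<n. \<Sum>j<m. F i j)" by (rule sum.swap)
  also have "\<dots> = B" using outA by simp
  finally have tot: "(\<Sum>j<m. f (Chr j) Snk) = (\<Sum>j<m. q j)" using eq by simp
  have snksat: "f (Chr j) Snk = q j" if "j<m" for j
    using sum_le_eq[of "{..<m}" "\<lambda>j. f (Chr j) Snk" q j] snkle tot that by auto
  have colsum: "(\<Sum>i<n. F i j) = q j" if "j<m" for j using inC snksat that by simp
  have edge: "G_edge n t v i j" if "i<n" "j<m" "F i j \<noteq> 0" for i j
  proof (rule ccontr)
    assume "\<not> G_edge n t v i j"
    then have "c (Agt i) (Chr j) = 0" using that by simp
    then have "F i j = 0" unfolding F_def using fz[OF fl] that by simp
    then show False using that by simp
  qed
  define z where "z i j = F i j / q j" for i j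
  have vz: "v i j * z i j = - F i j / t i" if "i<n" "j<m" for i j
  proof (cases "F i j = 0")
    case True then show ?thesis by (simp add: z_def)
  next
    case False
    then have "v i j = - q j / t i" using v_eq edge that by auto
    then show ?thesis using q_pos[OF that(2)] by (simp add: z_def)
  qed
  have utz: "util m v i (z i) = u i" if i: "i<n" for i
  proof -
    have "util m v i (z i) = (\<Sum>j<m. - F i j / t i)" unfolding util_def using vz i by simp
    also have "\<dots> = - (\<Sum>j<m. F i j) / t i" by (simp add: sum_divide_distrib sum_negf)
    also have "\<dots> = b i / t i" using outA[OF i] bneg i by (simp add: abs_of_neg)
    finally show ?thesis using t_u[OF i] by simp
  qed
  have alloc: "is_allocation n m z"
    unfolding is_allocation_def
  proof safe
    fix i j assume ij: "i<n" "j<m" then show "0 \<le> z i j" unfolding z_def using Fnn[OF ij] q_pos[OF ij(2)] by simp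
  next
    fix j assume j: "j<m"
    have "(\<Sum>i<n. F i j / q j) = (\<Sum>i<n. F i j) / q j" by (simp add: sum_divide_distrib)
    then show "(\<Sum>i<n. z i j) = 1" using colsum[OF j] q_pos[OF j] by (simp add: z_def)
  qed
  have budget: "(\<Sum>j<m. - q j * z i j) = b i" if i: "i<n" for i
  proof -
    have "(\<Sum>j<m. - q j * z i j) = (\<Sum>j<m. - F i j)"
    proof (rule sum.cong)
      fix j assume "j \<in> {..<m}"
      then have "q j \<noteq> 0" using q_pos by fastforce
      then show "- q j * z i j = - F i j" by (simp add: z_def)
    qed simp
    also have "\<dots> = b i" using outA[OF i] bneg[rule_format, OF i] by (simp add: sum_negf abs_of_neg)
    finally show ?thesis .
  qed
  have opt: "util m v i x \<le> util m v i (z i)"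
    if i: "i<n" and x: "\<forall>j<m. 0 \<le> x j" and sx: "(\<Sum>j<m. - q j * x j) \<le> b i" for i x
  proof -
    have "util m v i x \<le> (\<Sum>j<m. (- q j / t i) * x j)" unfolding util_def
    proof (rule sum_mono)
      fix j assume "j \<in> {..<m}" then have j: "j<m" by simp
      show "v i j * x j \<le> - q j / t i * x j"
        by (rule mult_right_mono) (use v_le[OF i j] x j in auto)
    qed
    also have "\<dots> = (\<Sum>j<m. - q j * x j) / t i" unfolding sum_divide_distrib by (rule sum.cong) auto
    also have "\<dots> \<le> b i / t i" using sx t_pos[OF i] by (simp add: divide_right_mono)
    also have "\<dots> = util m v i (z i)" using t_u[OF i] utz[OF i] by simp
    finally show ?thesis .
  qed
  have comp: "competitive_allocation n m v b z"
    unfolding competitive_allocation_def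
    apply (intro conjI alloc exI[of _ "\<lambda>j. - q j"])
    using q_pos budget opt by auto
  have zeq: "z = (\<lambda>i j. f (Agt i) (Chr j) / q j)" by (intro ext) (simp add: z_def F_def)
  show ?thesis using comp utz unfolding zeq by auto
qed

lemma prices:
  assumes ca: "competitive_allocation n m v b z" and ut: "\<forall>i<n. util m v i (z i) = u i"
  shows "(\<forall>j<m. (\<Sum>i<n. z i j) = 1) \<and> (\<forall>i<n. \<forall>j<m. 0 \<le> z i j) \<and>
         (\<forall>i<n. (\<Sum>j<m. - q j * z i j) = b i) \<and> (\<forall>i<n. \<forall>j<m. 0 < z i j \<longrightarrow> G_edge n t v i j)"
proof -
  obtain p where pneg: "\<forall>j<m. p j < 0" and bud: "\<forall>i<n. (\<Sum>j<m. p j * z i j) \<le> b i"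
    and opt: "\<forall>i<n. \<forall>x. (\<forall>j<m. 0 \<le> x j) \<and> (\<Sum>j<m. p j * x j) \<le> b i \<longrightarrow> util m v i x \<le> util m v i (z i)"
    using ca unfolding competitive_allocation_def by blast
  have col: "\<forall>j<m. (\<Sum>i<n. z i j) = 1" and znn: "\<forall>i<n. \<forall>j<m. 0 \<le> z i j"
    using ca unfolding competitive_allocation_def is_allocation_def by auto
  have pa: "- p j \<le> t i * \<bar>v i j\<bar>" if i: "i<n" and j: "j<m" for i j
  proof -
    define x where "x k = (if k = j then b i / p j else 0)" for k
    have bp: "0 < b i / p j" using bneg pneg i j by (simp add: divide_neg_neg)
    have xnn: "\<forall>k<m. 0 \<le> x k" using bp by (simp add: x_def)
    have pj: "p j \<noteq> 0" using pneg j by auto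
    have "(\<Sum>k<m. p k * x k) = (\<Sum>k<m. if k = j then b i else 0)"
      by (rule sum.cong) (use pj in \<open>auto simp: x_def\<close>)
    also have "\<dots> = b i" using j by simp
    finally have "util m v i x \<le> u i" using opt xnn i ut by auto
    moreover have "util m v i x = v i j * (b i / p j)"
    proof -
      have "util m v i x = (\<Sum>k<m. if k = j then v i j * (b i / p j) else 0)"
        unfolding util_def by (rule sum.cong) (auto simp: x_def)
      then show ?thesis using j by simp
    qed
    ultimately have h: "v i j * (b i / p j) \<le> u i" by simp
    have h2: "u i * p j \<le> v i j * (b i / p j) * p j"
      using mult_right_mono_neg[OF h less_imp_le[of "p j" 0]] pneg j by simp
    then have h2': "u i * p j \<le> v i j * b i" using pj by simp
    have h3: "v i j * b i / u i \<le> p j" using h2' uneg i by (simp add: neg_divide_le_eq mult.commute)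
    have "t i * \<bar>v i j\<bar> = - (v i j * b i / u i)" using vneg i j by (simp add: tau_def abs_of_neg)
    then show ?thesis using h3 by simp
  qed
  have beq: "(\<Sum>j<m. p j * z i j) = b i" if i: "i<n" for i
  proof (rule ccontr)
    let ?s = "\<Sum>j<m. p j * z i j"
    assume ne: "?s \<noteq> b i"
    then have lt: "?s < b i" using bud i by (simp add: less_le)
    have s0: "?s < 0" using lt bneg i by force
    define a where "a = b i / ?s"
    have a0: "0 < a" using s0 bneg i by (simp add: a_def divide_neg_neg)
    have a1: "a < 1" using s0 lt by (simp add: a_def neg_divide_less_eq)
    define x where "x k = a * z i k" for k
    have xnn: "\<forall>k<m. 0 \<le> x k" using a0 znn i by (simp add: x_def)
    have "(\<Sum>k<m. p k * x k) = a * ?s" by (simp add: x_def sum_distrib_left algebra_simps)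
    also have "\<dots> = b i" using s0 by (simp add: a_def)
    finally have "util m v i x \<le> u i" using opt xnn i ut by auto
    moreover have "util m v i x = a * util m v i (z i)"
      unfolding util_def x_def sum_distrib_left by (rule sum.cong) (auto simp: algebra_simps)
    then have "util m v i x = a * u i" using ut i by simp
    moreover have "1 * u i < a * u i" using mult_strict_right_mono_neg[OF a1, of "u i"] uneg i by simp
    ultimately show False by simp
  qed
  have vle: "v i j \<le> p j / t i" if "i<n" "j<m" for i j
  proof -
    have "- p j \<le> t i * (- v i j)" using pa[OF that] vneg that by (simp add: abs_of_neg)
    then show ?thesis using t_pos[OF that(1)] by (simp add: pos_le_divide_eq algebra_simps)
  qed
  have tight: "v i j * z i j = p j / t i * z i j" if i: "i<n" and j: "j<m" for i j
  proof -
    have le: "\<forall>k\<in>{..<m}. v i k * z i k \<le> p k / t i * z i k"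
    proof
      fix k assume "k \<in> {..<m}" then have k: "k<m" by simp
      show "v i k * z i k \<le> p k / t i * z i k"
        by (rule mult_right_mono) (use vle[OF i k] znn i k in auto)
    qed
    have "(\<Sum>k<m. p k / t i * z i k) = (\<Sum>k<m. p k * z i k) / t i"
      unfolding sum_divide_distrib by (rule sum.cong) auto
    also have "\<dots> = u i" using beq[OF i] t_u[OF i] by simp
    also have "\<dots> = (\<Sum>k<m. v i k * z i k)" using ut i by (simp add: util_def)
    finally show ?thesis using sum_le_eq[of "{..<m}" "\<lambda>k. v i k * z i k" "\<lambda>k. p k / t i * z i k" j] le j
      by auto
  qed
  have tz: "t i * \<bar>v i j\<bar> = - p j" if "i<n" "j<m" "0 < z i j" for i j
  proof -
    have "v i j = p j / t i" using tight[OF that(1,2)] that(3) by (metis mult_right_cancel less_irrefl)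
    then show ?thesis using t_pos[OF that(1)] vneg that pneg[rule_format, OF that(2)] by (simp add: abs_of_neg)
  qed
  have qp: "q j = - p j" if j: "j<m" for j
  proof -
    have "- p j \<le> q j" by (rule q_ge) (use pa j in auto)
    moreover obtain i where i: "i<n" "0 < z i j"
    proof (rule ccontr)
      assume "\<not> thesis"
      then have "\<forall>i<n. z i j \<le> 0" using that by (meson not_le)
      then have "\<forall>i<n. z i j = 0" using znn j by force
      then have "(\<Sum>i<n. z i j) = 0" by simp
      then show False using col j by simp
    qed
    then have "q j \<le> - p j" using q_le[OF i(1), of j] tz[OF i(1) j i(2)] by simp
    ultimately show ?thesis by simp
  qed
  have b2: "\<forall>i<n. (\<Sum>j<m. - q j * z i j) = b i" using beq qp by simp
  have e2: "\<forall>i<n. \<forall>j<m. 0 < z i j \<longrightarrow> G_edge n t v i j" using edge_iff tz qp by simp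
  show ?thesis using col znn b2 e2 by blast
qed

lemma part3:
  assumes ca: "competitive_allocation n m v b z" and ut: "\<forall>i<n. util m v i (z i) = u i"
  shows "B = (\<Sum>j<m. q j) \<and> (\<exists>f. is_flow V Src Snk c f \<and> flow_value V Src f = B \<and>
             (\<forall>i<n. \<forall>j<m. f (Agt i) (Chr j) = q j * z i j))"
proof -
  have col: "\<forall>j<m. (\<Sum>i<n. z i j) = 1" and znn: "\<forall>i<n. \<forall>j<m. 0 \<le> z i j"
    and bud: "\<forall>i<n. (\<Sum>j<m. - q j * z i j) = b i" and edg: "\<forall>i<n. \<forall>j<m. 0 < z i j \<longrightarrow> G_edge n t v i j"
    using prices[OF ca ut] by auto
  have zedge: "z i j = 0" if "i<n" "j<m" "\<not> G_edge n t v i j" for i j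
    using znn edg that by force
  have qz: "(\<Sum>j<m. q j * z i j) = \<bar>b i\<bar>" if "i<n" for i
  proof -
    have "- (\<Sum>j<m. q j * z i j) = b i" "b i < 0" using bud that bneg by (auto simp: sum_negf)
    then show ?thesis by (simp add: abs_of_neg)
  qed
  have qnn: "0 \<le> q j" if "j<m" for j using q_pos[OF that] by simp
  define f where "f = mkf n m (\<lambda>i. \<bar>b i\<bar>) q (\<lambda>i j. q j * z i j)"
  have isf: "is_flow V Src Snk c f"
    unfolding is_flow_def
  proof (intro conjI ballI)
    fix x y assume x: "x\<in>V" and y: "y\<in>V"
    show "0 \<le> f x y" using x y znn qnn by (cases x; cases y) (auto simp: f_def)
  next
    fix x y assume x: "x\<in>V" and y: "y\<in>V"
    show "ereal (f x y) \<le> c x y" using x y zedge by (cases x; cases y) (auto simp: f_def)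
  next
    fix x assume "x \<in> V - {Src, Snk}"
    then have x: "x\<in>V" "x \<noteq> Src" "x \<noteq> Snk" by auto
    show "(\<Sum>y\<in>V. f y x) = (\<Sum>y\<in>V. f x y)"
    proof (cases x)
      case (Agt i)
      then have i: "i<n" using x by simp
      have "(\<Sum>y\<in>V. f y x) = \<bar>b i\<bar>" using Agt i by (simp add: sumV f_def cong: sum.cong_simp)
      moreover have "(\<Sum>y\<in>V. f x y) = (\<Sum>j<m. q j * z i j)" using Agt i
        by (simp add: sumV f_def cong: sum.cong_simp)
      ultimately show ?thesis using qz[OF i] by simp
    next
      case (Chr j)
      then have j: "j<m" using x by simp
      have "(\<Sum>y\<in>V. f y x) = (\<Sum>i<n. q j * z i j)" using Chr j by (simp add: sumV f_def cong: sum.cong_simp)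
      also have "\<dots> = q j" using col j by (simp add: sum_distrib_left[symmetric])
      finally show ?thesis using Chr j by (simp add: sumV f_def cong: sum.cong_simp)
    qed (use x in auto)
  qed
  have fv: "flow_value V Src f = B" unfolding flow_value_def by (simp add: sumV f_def cong: sum.cong_simp)
  have fz': "\<forall>i<n. \<forall>j<m. f (Agt i) (Chr j) = q j * z i j" by (simp add: f_def)
  have "(\<Sum>j<m. q j) = (\<Sum>j<m. \<Sum>i<n. q j * z i j)"
    by (rule sum.cong) (use col in \<open>auto simp: sum_distrib_left[symmetric]\<close>)
  also have "\<dots> = (\<Sum>i<n. \<Sum>j<m. q j * z i j)" by (rule sum.swap)
  also have "\<dots> = B" using qz by simp
  finally show ?thesis using isf fv fz' by auto
qed

end

theorem proposition5:
  fixes n m :: nat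
    and v :: "nat \<Rightarrow> nat \<Rightarrow> real"
    and b u :: "nat \<Rightarrow> real"
  assumes "0 < n"
    and "\<forall>i<n. \<forall>j<m. v i j < 0"
    and "\<forall>i<n. b i < 0"
    and "\<forall>i<n. u i < 0"
  shows "(competitive_profile n m v b u \<longleftrightarrow>
           (\<Sum>i<n. \<bar>b i\<bar>) = (\<Sum>j<m. qcap n v u b j) \<and>
           is_max_flow_value (N_vertices n m) Src Snk (N_cap n m v u b) (\<Sum>i<n. \<bar>b i\<bar>)) \<and>
         (\<forall>f. (\<Sum>i<n. \<bar>b i\<bar>) = (\<Sum>j<m. qcap n v u b j) \<and>
             is_flow (N_vertices n m) Src Snk (N_cap n m v u b) f \<and>
             flow_value (N_vertices n m) Src f = (\<Sum>i<n. \<bar>b i\<bar>) \<longrightarrow>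
             (let z = (\<lambda>i j. f (Agt i) (Chr j) / qcap n v u b j) in
                competitive_allocation n m v b z \<and> (\<forall>i<n. util m v i (z i) = u i))) \<and>
         (\<forall>z. competitive_allocation n m v b z \<and> (\<forall>i<n. util m v i (z i) = u i) \<longrightarrow>
             (\<exists>f. is_flow (N_vertices n m) Src Snk (N_cap n m v u b) f \<and>
                  flow_value (N_vertices n m) Src f = (\<Sum>i<n. \<bar>b i\<bar>) \<and>
                  (\<forall>i<n. \<forall>j<m. f (Agt i) (Chr j) = qcap n v u b j * z i j)))"
proof -
  interpret mk n m v b u using assms by unfold_locales
  show ?thesis
  proof (intro conjI allI impI)
    show "competitive_profile n m v b u \<longleftrightarrow>
           (\<Sum>i<n. \<bar>b i\<bar>) = (\<Sum>j<m. qcap n v u b j) \<and>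
           is_max_flow_value (N_vertices n m) Src Snk (N_cap n m v u b) (\<Sum>i<n. \<bar>b i\<bar>)"
    proof
      assume "competitive_profile n m v b u"
      then obtain z where ca: "competitive_allocation n m v b z" and ut: "\<forall>i<n. util m v i (z i) = u i"
        unfolding competitive_profile_def by auto
      from part3[OF ca ut] show "B = (\<Sum>j<m. q j) \<and> is_max_flow_value V Src Snk c B"
        unfolding is_max_flow_value_def using val_le by blast
    next
      assume h: "B = (\<Sum>j<m. q j) \<and> is_max_flow_value V Src Snk c B"
      then obtain f where fl: "is_flow V Src Snk c f" and fv: "flow_value V Src f = B"
        unfolding is_max_flow_value_def by auto
      from part2[OF _ fl fv] h show "competitive_profile n m v b u"
        unfolding competitive_profile_def by auto
    qed
  next
    fix f assume "B = (\<Sum>j<m. q j) \<and> is_flow V Src Snk c f \<and> flow_value V Src f = B"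
    then show "let z = (\<lambda>i j. f (Agt i) (Chr j) / q j) in
                competitive_allocation n m v b z \<and> (\<forall>i<n. util m v i (z i) = u i)"
      unfolding Let_def using part2 by auto
  next
    fix z assume "competitive_allocation n m v b z \<and> (\<forall>i<n. util m v i (z i) = u i)"
    then show "\<exists>f. is_flow V Src Snk c f \<and> flow_value V Src f = B \<and>
                  (\<forall>i<n. \<forall>j<m. f (Agt i) (Chr j) = q j * z i j)"
      using part3 by auto
  qed
qed

end
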